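(* (Soundness) For every sequent $\Gamma\vdash\Delta$ of $\text{HXPath}_{\rm D}$: if $\Gamma\vdash\Delta$ is provable in $\mathbf{G}$ (written $\Gamma\vdash_{\mathbf G}\Delta$), then $\Gamma\vdash\Delta$ is valid.
   Context: Syntax of $\text{HXPath}_{\rm D}$: fix pairwise disjoint sets $\mathsf{Prop}$ (propositions, countably infinite), $\mathsf{Nom}$ (nominals, countably infinite), $\mathsf{Mod}$ (modalities, finite), $\mathsf{Cmp}$ (comparisons, finite). Path expressions $\alpha,\beta ::= \mathsf{a} \mid i{:} \mid \varphi? \mid \alpha\beta$ and node expressions $\varphi,\psi ::= p \mid i \mid \bot \mid \varphi\to\psi \mid @_i\varphi \mid \langle \mathsf{a}\rangle\varphi \mid \langle\alpha =_{\mathsf{c}} \beta\rangle \mid \langle \alpha\neq_{\mathsf{c}}\beta\rangle$, with $p\in\mathsf{Prop}$, $i\in\mathsf{Nom}$, $\mathsf{a}\in\mathsf{Mod}$, $\mathsf{c}\in\mathsf{Cmp}$. Abbreviations: $\top:=\bot\to\bot$, $\neg\varphi:=\varphi\to\bot$, $\varphi\lor\psi := \neg\varphi\to\psi$, $\varphi\land\psi:=\neg(\varphi\to\neg\psi)$, $\varphi\leftrightarrow\psi$ as usual; $\epsilon:=\top?$; $\langle j{:}\rangle\varphi := @_j\varphi$, $\langle\psi?\rangle\varphi:=\psi\land\varphi$, $\langle\alpha\beta\rangle\varphi:=\langle\alpha\rangle\langle\beta\rangle\varphi$, $[\alpha]\varphi:=\neg\langle\alpha\rangle\neg\varphi$.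 The symbol $\blacktriangle$ stands for either $=_{\mathsf{c}}$ or $\neq_{\mathsf{c}}$ (for some $\mathsf{c}$). Models: $\mathcal{M}=\langle N,\{R_{\mathsf a}\}_{\mathsf a\in\mathsf{Mod}},\{\approx_{\mathsf c}\}_{\mathsf c\in\mathsf{Cmp}},g,V\rangle$ with $N\neq\emptyset$, each $R_{\mathsf a}\subseteq N\times N$, each $\approx_{\mathsf c}$ an equivalence relation on $N$, $g:\mathsf{Nom}\to N$, $V:\mathsf{Prop}\to 2^N$. Semantics: $\mathcal M,n,n'\Vdash \mathsf a$ iff $nR_{\mathsf a}n'$; $\mathcal M,n,n'\Vdash i{:}$ iff $g(i)=n'$; $\mathcal M,n,n'\Vdash\varphi?$ iff $n=n'$ and $\mathcal M,n\Vdash\varphi$; $\mathcal M,n,n'\Vdash\alpha\beta$ iff there is $n''$ with $\mathcal M,n,n''\Vdash\alpha$ and $\mathcal M,n'',n'\Vdash\beta$; $\mathcal M,n\Vdash p$ iff $n\in V(p)$; $\mathcal M,n\Vdash i$ iff $g(i)=n$; $\bot$ never holds; $\to$ classical; $\mathcal M,n\Vdash @_i\varphi$ iff $\mathcal M,g(i)\Vdash\varphi$; $\mathcal M,n\Vdash\langle\mathsf a\rangle\varphi$ iff some $n'$ has $nR_{\mathsf a}n'$ and $\mathcal M,n'\Vdash\varphi$; $\mathcal M,n\Vdash\langle\alpha=_{\mathsf c}\beta\rangle$ (resp. $\langle\alpha\neq_{\mathsf c}\beta\rangle$) iff there are $n',n''$ with $\mathcal M,n,n'\Vdash\alpha$,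 $\mathcal M,n,n''\Vdash\beta$ and $n'\approx_{\mathsf c}n''$ (resp. $n'\not\approx_{\mathsf c}n''$). Sequents: a sequent $\Gamma\vdash\Delta$ consists of finite (possibly empty) sets $\Gamma,\Delta$ of node expressions each of the form $\langle i{:}\blacktriangle j{:}\rangle$ or $@_i\varphi$. It is valid iff for every model $\mathcal M$ and node $n$, if $\mathcal M,n\Vdash\gamma$ for all $\gamma\in\Gamma$ then $\mathcal M,n\Vdash\delta$ for some $\delta\in\Delta$. Notation "$\varphi,\Gamma$" means $\{\varphi\}\cup\Gamma$. The calculus $\mathbf{G}$ (each rule written premisses $\Rightarrow$ conclusion): (Ax) axiom $\varphi,\Gamma\vdash\Delta,\varphi$ where $\varphi$ is of the form $@_ip$, $@_ij$ or $\langle i{:}=_{\mathsf c}j{:}\rangle$; ($\bot$) axiom $@_i\bot,\Gamma\vdash\Delta$; ($\to$L) $\Gamma\vdash\Delta,@_i\varphi$ and $@_i\psi,\Gamma\vdash\Delta$ $\Rightarrow$ $@_i(\varphi\to\psi),\Gamma\vdash\Delta$; ($\to$R) $@_i\varphi,\Gamma\vdash\Delta,@_i\psi\Rightarrow\Gamma\vdash\Delta,@_i(\varphi\to\psi)$; ($@$T) $@_ii,\Gamma\vdash\Delta\Rightarrow\Gamma\vdash\Delta$; ($@5$) $@_jk,@_ij,@_ik,\Gamma\vdash\Delta\Rightarrow @_ij,@_ik,\Gamma\vdash\Delta$; (Nom) $@_ij,\Gamma\vdash\Delta\Rightarrow\Gamma\vdash\Delta$, $j$ not in the conclusion; (S$_1$)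 $@_j\varphi,@_ij,@_i\varphi,\Gamma\vdash\Delta\Rightarrow @_ij,@_i\varphi,\Gamma\vdash\Delta$, $\varphi$ of the form $p$, $\bot$ or $\langle\mathsf a\rangle k$; (S$_2$) $@_i\langle\mathsf a\rangle k,@_jk,@_i\langle\mathsf a\rangle j,\Gamma\vdash\Delta\Rightarrow @_jk,@_i\langle\mathsf a\rangle j,\Gamma\vdash\Delta$; (S$_3$) $\langle j{:}=_{\mathsf c}k{:}\rangle,@_ij,\langle i{:}=_{\mathsf c}k{:}\rangle,\Gamma\vdash\Delta\Rightarrow @_ij,\langle i{:}=_{\mathsf c}k{:}\rangle,\Gamma\vdash\Delta$; ($@$L) $@_i\varphi,\Gamma\vdash\Delta\Rightarrow @_j@_i\varphi,\Gamma\vdash\Delta$; ($@$R) $\Gamma\vdash\Delta,@_i\varphi\Rightarrow\Gamma\vdash\Delta,@_j@_i\varphi$; ($\langle\mathsf a\rangle$L) $@_i\langle\mathsf a\rangle j,@_j\varphi,\Gamma\vdash\Delta\Rightarrow @_i\langle\mathsf a\rangle\varphi,\Gamma\vdash\Delta$, $j$ not in the conclusion; ($\langle\mathsf a\rangle$R) $@_i\langle\mathsf a\rangle j,\Gamma\vdash\Delta,@_i\langle\mathsf a\rangle\varphi,@_j\varphi\Rightarrow @_i\langle\mathsf a\rangle j,\Gamma\vdash\Delta,@_i\langle\mathsf a\rangle\varphi$; ($\langle\blacktriangle\rangle$L) $@_i\langle\alpha\rangle j,@_i\langle\beta\rangle k,\langle j{:}\blacktriangle k{:}\rangle,\Gamma\vdash\Delta\Rightarrow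 @_i\langle\alpha\blacktriangle\beta\rangle,\Gamma\vdash\Delta$, $j,k$ distinct and not in the conclusion; ($\langle\blacktriangle\rangle$R) $@_i\langle\alpha\rangle j,@_i\langle\beta\rangle k,\Gamma\vdash\Delta,@_i\langle\alpha\blacktriangle\beta\rangle,\langle j{:}\blacktriangle k{:}\rangle\Rightarrow @_i\langle\alpha\rangle j,@_i\langle\beta\rangle k,\Gamma\vdash\Delta,@_i\langle\alpha\blacktriangle\beta\rangle$; (EqT) $\langle i{:}=_{\mathsf c}i{:}\rangle,\Gamma\vdash\Delta\Rightarrow\Gamma\vdash\Delta$; (Eq5) $\langle j{:}=_{\mathsf c}k{:}\rangle,\langle i{:}=_{\mathsf c}j{:}\rangle,\langle i{:}=_{\mathsf c}k{:}\rangle,\Gamma\vdash\Delta\Rightarrow\langle i{:}=_{\mathsf c}j{:}\rangle,\langle i{:}=_{\mathsf c}k{:}\rangle,\Gamma\vdash\Delta$; (NEqL) $\Gamma\vdash\Delta,\langle i{:}=_{\mathsf c}j{:}\rangle\Rightarrow\langle i{:}\neq_{\mathsf c}j{:}\rangle,\Gamma\vdash\Delta$; (NEqR) $\langle i{:}=_{\mathsf c}j{:}\rangle,\Gamma\vdash\Delta\Rightarrow\Gamma\vdash\Delta,\langle i{:}\neq_{\mathsf c}j{:}\rangle$; (Cut) $\Gamma\vdash\Delta,\varphi$ and $\varphi,\Gamma'\vdash\Delta'\Rightarrow\Gamma,\Gamma'\vdash\Delta,\Delta'$; (WL) $\Gamma\vdash\Delta\Rightarrow\varphi,\Gamma\vdash\Delta$;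 (WR) $\Gamma\vdash\Delta\Rightarrow\Gamma\vdash\Delta,\varphi$. Here $@_i\langle\alpha\rangle j$ for a path $\alpha$ is understood via the abbreviations above. A derivation is a finite tree of sequents in which each non-leaf node is the conclusion of an instance of a rule of $\mathbf G$ whose premisses are its children. A sequent is provable in $\mathbf G$ if it is the root of a derivation all of whose leaves are instances of (Ax) or ($\bot$). *)

theory Defs
  imports Main
begin

text \<open>Syntax of HXPath_D. Propositions and nominals are indexed by nat (countably
infinite); modalities 'm and comparisons 'c are type parameters (required to be
finite in the main theorem).\<close>

datatype ('m, 'c) path =
    PMod 'm
  | PNom nat
  | PTest "('m, 'c) node"
  | PComp "('m, 'c) path" "('m, 'c) path"
and ('m, 'c) node =
    NProp nat
  | NNom nat
  | NBot
  | NImp "('m, 'c) node" "('m, 'c) node"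
  | NAt nat "('m, 'c) node"
  | NDia 'm "('m, 'c) node"
  | NEq "('m, 'c) path" 'c "('m, 'c) path"
  | NNeq "('m, 'c) path" 'c "('m, 'c) path"

definition NTop :: "('m, 'c) node" where "NTop = NImp NBot NBot"
definition NNot :: "('m, 'c) node \<Rightarrow> ('m, 'c) node" where "NNot \<phi> = NImp \<phi> NBot"
definition NAnd :: "('m, 'c) node \<Rightarrow> ('m, 'c) node \<Rightarrow> ('m, 'c) node" where
  "NAnd \<phi> \<psi> = NNot (NImp \<phi> (NNot \<psi>))"

fun pdia :: "('m, 'c) path \<Rightarrow> ('m, 'c) node \<Rightarrow> ('m, 'c) node" where
  "pdia (PMod a) \<phi> = NDia a \<phi>"
| "pdia (PNom j) \<phi> = NAt j \<phi>"
| "pdia (PTest \<psi>) \<phi> = NAnd \<psi> \<phi>"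
| "pdia (PComp \<alpha> \<beta>) \<phi> = pdia \<alpha> (pdia \<beta> \<phi>)"

text \<open>The symbol \<blacktriangle>: True means =_c, False means \<noteq>_c.\<close>
definition cmp :: "bool \<Rightarrow> ('m, 'c) path \<Rightarrow> 'c \<Rightarrow> ('m, 'c) path \<Rightarrow> ('m, 'c) node" where
  "cmp b \<alpha> c \<beta> = (if b then NEq \<alpha> c \<beta> else NNeq \<alpha> c \<beta>)"

primrec noms_path :: "('m, 'c) path \<Rightarrow> nat set"
  and noms_node :: "('m, 'c) node \<Rightarrow> nat set" where
  "noms_path (PMod a) = {}"
| "noms_path (PNom i) = {i}"
| "noms_path (PTest \<phi>) = noms_node \<phi>"
| "noms_path (PComp \<alpha> \<beta>) = noms_path \<alpha> \<union> noms_path \<beta>"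
| "noms_node (NProp p) = {}"
| "noms_node (NNom i) = {i}"
| "noms_node NBot = {}"
| "noms_node (NImp \<phi> \<psi>) = noms_node \<phi> \<union> noms_node \<psi>"
| "noms_node (NAt i \<phi>) = insert i (noms_node \<phi>)"
| "noms_node (NDia a \<phi>) = noms_node \<phi>"
| "noms_node (NEq \<alpha> c \<beta>) = noms_path \<alpha> \<union> noms_path \<beta>"
| "noms_node (NNeq \<alpha> c \<beta>) = noms_path \<alpha> \<union> noms_path \<beta>"

type_synonym ('m, 'c) sequent = "('m, 'c) node set \<times> ('m, 'c) node set"

definition noms_seq :: "('m, 'c) sequent \<Rightarrow> nat set" where
  "noms_seq s = (\<Union>\<phi>\<in>fst s \<union> snd s. noms_node \<phi>)"

definition seq_formula :: "('m, 'c) node \<Rightarrow> bool" where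
  "seq_formula \<phi> \<longleftrightarrow> (\<exists>b i c j. \<phi> = cmp b (PNom i) c (PNom j)) \<or> (\<exists>i \<psi>. \<phi> = NAt i \<psi>)"

definition is_sequent :: "('m, 'c) sequent \<Rightarrow> bool" where
  "is_sequent s \<longleftrightarrow> finite (fst s) \<and> finite (snd s) \<and> (\<forall>\<phi>\<in>fst s \<union> snd s. seq_formula \<phi>)"

record ('w, 'm, 'c) model =
  dom :: "'w set"
  rel :: "'m \<Rightarrow> ('w \<times> 'w) set"
  eqv :: "'c \<Rightarrow> ('w \<times> 'w) set"
  gnom :: "nat \<Rightarrow> 'w"
  val :: "nat \<Rightarrow> 'w set"

definition is_model :: "('w, 'm, 'c) model \<Rightarrow> bool" where
  "is_model M \<longleftrightarrow> dom M \<noteq> {}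
     \<and> (\<forall>a. rel M a \<subseteq> dom M \<times> dom M)
     \<and> (\<forall>c. equiv (dom M) (eqv M c))
     \<and> (\<forall>i. gnom M i \<in> dom M)
     \<and> (\<forall>p. val M p \<subseteq> dom M)"

primrec psat :: "('w, 'm, 'c) model \<Rightarrow> ('m, 'c) path \<Rightarrow> 'w \<Rightarrow> 'w \<Rightarrow> bool"
  and nsat :: "('w, 'm, 'c) model \<Rightarrow> ('m, 'c) node \<Rightarrow> 'w \<Rightarrow> bool" where
  "psat M (PMod a) n n' \<longleftrightarrow> (n, n') \<in> rel M a"
| "psat M (PNom i) n n' \<longleftrightarrow> gnom M i = n'"
| "psat M (PTest \<phi>) n n' \<longleftrightarrow> n = n' \<and> nsat M \<phi> n"
| "psat M (PComp \<alpha> \<beta>) n n' \<longleftrightarrow> (\<exists>n''\<in>dom M. psat M \<alpha> n n'' \<and> psat M \<beta> n'' n')"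
| "nsat M (NProp p) n \<longleftrightarrow> n \<in> val M p"
| "nsat M (NNom i) n \<longleftrightarrow> gnom M i = n"
| "nsat M NBot n \<longleftrightarrow> False"
| "nsat M (NImp \<phi> \<psi>) n \<longleftrightarrow> (nsat M \<phi> n \<longrightarrow> nsat M \<psi> n)"
| "nsat M (NAt i \<phi>) n \<longleftrightarrow> nsat M \<phi> (gnom M i)"
| "nsat M (NDia a \<phi>) n \<longleftrightarrow> (\<exists>n'\<in>dom M. (n, n') \<in> rel M a \<and> nsat M \<phi> n')"
| "nsat M (NEq \<alpha> c \<beta>) n \<longleftrightarrow> (\<exists>n'\<in>dom M. \<exists>n''\<in>dom M.
      psat M \<alpha> n n' \<and> psat M \<beta> n n'' \<and> (n', n'') \<in> eqv M c)"
| "nsat M (NNeq \<alpha> c \<beta>) n \<longleftrightarrow> (\<exists>n'\<in>dom M. \<exists>n''\<in>dom M.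
      psat M \<alpha> n n' \<and> psat M \<beta> n n'' \<and> (n', n'') \<notin> eqv M c)"

text \<open>Validity over all models whose nodes are drawn from type 'w (the theorem
  is universally quantified over 'w).\<close>
definition valid :: "'w itself \<Rightarrow> ('m, 'c) sequent \<Rightarrow> bool" where
  "valid _ s \<longleftrightarrow> (\<forall>M :: ('w, 'm, 'c) model. is_model M \<longrightarrow> (\<forall>n\<in>dom M.
      (\<forall>\<gamma>\<in>fst s. nsat M \<gamma> n) \<longrightarrow> (\<exists>\<delta>\<in>snd s. nsat M \<delta> n)))"

text \<open>Rule instances of the calculus G: grule premisses conclusion.\<close>
abbreviation Ateq :: "nat \<Rightarrow> 'c \<Rightarrow> nat \<Rightarrow> ('m, 'c) node" where
  "Ateq i c j \<equiv> NEq (PNom i) c (PNom j)"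

inductive grule :: "('m, 'c) sequent list \<Rightarrow> ('m, 'c) sequent \<Rightarrow> bool" where
  Ax: "\<phi> = NAt i (NProp p) \<or> \<phi> = NAt i (NNom j) \<or> \<phi> = Ateq i c j
        \<Longrightarrow> grule [] (insert \<phi> \<Gamma>, insert \<phi> \<Delta>)"
| BotAx: "grule [] (insert (NAt i NBot) \<Gamma>, \<Delta>)"
| ImpL: "grule [(\<Gamma>, insert (NAt i \<phi>) \<Delta>), (insert (NAt i \<psi>) \<Gamma>, \<Delta>)]
           (insert (NAt i (NImp \<phi> \<psi>)) \<Gamma>, \<Delta>)"
| ImpR: "grule [(insert (NAt i \<phi>) \<Gamma>, insert (NAt i \<psi>) \<Delta>)]
           (\<Gamma>, insert (NAt i (NImp \<phi> \<psi>)) \<Delta>)"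
| AtT: "grule [(insert (NAt i (NNom i)) \<Gamma>, \<Delta>)] (\<Gamma>, \<Delta>)"
| At5: "grule [(insert (NAt j (NNom k)) (insert (NAt i (NNom j)) (insert (NAt i (NNom k)) \<Gamma>)), \<Delta>)]
           (insert (NAt i (NNom j)) (insert (NAt i (NNom k)) \<Gamma>), \<Delta>)"
| Nom: "j \<notin> noms_seq (\<Gamma>, \<Delta>) \<Longrightarrow> grule [(insert (NAt i (NNom j)) \<Gamma>, \<Delta>)] (\<Gamma>, \<Delta>)"
| S1: "(\<exists>p. \<phi> = NProp p) \<or> \<phi> = NBot \<or> (\<exists>a k. \<phi> = NDia a (NNom k)) \<Longrightarrow>
        grule [(insert (NAt j \<phi>) (insert (NAt i (NNom j)) (insert (NAt i \<phi>) \<Gamma>)), \<Delta>)]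
           (insert (NAt i (NNom j)) (insert (NAt i \<phi>) \<Gamma>), \<Delta>)"
| S2: "grule [(insert (NAt i (NDia a (NNom k))) (insert (NAt j (NNom k)) (insert (NAt i (NDia a (NNom j))) \<Gamma>)), \<Delta>)]
           (insert (NAt j (NNom k)) (insert (NAt i (NDia a (NNom j))) \<Gamma>), \<Delta>)"
| S3: "grule [(insert (Ateq j c k) (insert (NAt i (NNom j)) (insert (Ateq i c k) \<Gamma>)), \<Delta>)]
           (insert (NAt i (NNom j)) (insert (Ateq i c k) \<Gamma>), \<Delta>)"
| AtL: "grule [(insert (NAt i \<phi>) \<Gamma>, \<Delta>)] (insert (NAt j (NAt i \<phi>)) \<Gamma>, \<Delta>)"
| AtR: "grule [(\<Gamma>, insert (NAt i \<phi>) \<Delta>)] (\<Gamma>, insert (NAt j (NAt i \<phi>)) \<Delta>)"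
| DiaL: "j \<notin> noms_seq (insert (NAt i (NDia a \<phi>)) \<Gamma>, \<Delta>) \<Longrightarrow>
        grule [(insert (NAt i (NDia a (NNom j))) (insert (NAt j \<phi>) \<Gamma>), \<Delta>)]
           (insert (NAt i (NDia a \<phi>)) \<Gamma>, \<Delta>)"
| DiaR: "grule [(insert (NAt i (NDia a (NNom j))) \<Gamma>, insert (NAt i (NDia a \<phi>)) (insert (NAt j \<phi>) \<Delta>))]
           (insert (NAt i (NDia a (NNom j))) \<Gamma>, insert (NAt i (NDia a \<phi>)) \<Delta>)"
| CmpL: "j \<noteq> k \<Longrightarrow> j \<notin> noms_seq (insert (NAt i (cmp b \<alpha> c \<beta>)) \<Gamma>, \<Delta>) \<Longrightarrow>
         k \<notin> noms_seq (insert (NAt i (cmp b \<alpha> c \<beta>)) \<Gamma>, \<Delta>) \<Longrightarrow>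
        grule [(insert (NAt i (pdia \<alpha> (NNom j))) (insert (NAt i (pdia \<beta> (NNom k)))
                  (insert (cmp b (PNom j) c (PNom k)) \<Gamma>)), \<Delta>)]
           (insert (NAt i (cmp b \<alpha> c \<beta>)) \<Gamma>, \<Delta>)"
| CmpR: "grule [(insert (NAt i (pdia \<alpha> (NNom j))) (insert (NAt i (pdia \<beta> (NNom k))) \<Gamma>),
                 insert (NAt i (cmp b \<alpha> c \<beta>)) (insert (cmp b (PNom j) c (PNom k)) \<Delta>))]
           (insert (NAt i (pdia \<alpha> (NNom j))) (insert (NAt i (pdia \<beta> (NNom k))) \<Gamma>),
            insert (NAt i (cmp b \<alpha> c \<beta>)) \<Delta>)"
| EqT: "grule [(insert (Ateq i c i) \<Gamma>, \<Delta>)] (\<Gamma>, \<Delta>)"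
| Eq5: "grule [(insert (Ateq j c k) (insert (Ateq i c j) (insert (Ateq i c k) \<Gamma>)), \<Delta>)]
           (insert (Ateq i c j) (insert (Ateq i c k) \<Gamma>), \<Delta>)"
| NEqL: "grule [(\<Gamma>, insert (Ateq i c j) \<Delta>)] (insert (NNeq (PNom i) c (PNom j)) \<Gamma>, \<Delta>)"
| NEqR: "grule [(insert (Ateq i c j) \<Gamma>, \<Delta>)] (\<Gamma>, insert (NNeq (PNom i) c (PNom j)) \<Delta>)"
| Cut: "grule [(\<Gamma>, insert \<phi> \<Delta>), (insert \<phi> \<Gamma>', \<Delta>')] (\<Gamma> \<union> \<Gamma>', \<Delta> \<union> \<Delta>')"
| WL: "grule [(\<Gamma>, \<Delta>)] (insert \<phi> \<Gamma>, \<Delta>)"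
| WR: "grule [(\<Gamma>, \<Delta>)] (\<Gamma>, insert \<phi> \<Delta>)"

text \<open>Provability: roots of finite derivation trees of sequents whose leaves are
  axiom instances (rules with no premisses: Ax, BotAx).\<close>
inductive provable :: "('m, 'c) sequent \<Rightarrow> bool" where
  "grule ps s \<Longrightarrow> is_sequent s \<Longrightarrow> (\<forall>p\<in>set ps. provable p) \<Longrightarrow> provable s"

end

theory Submission
  imports Defs
begin

lemma noms_upd:
  "j \<notin> noms_path \<alpha> \<Longrightarrow> psat (M\<lparr>gnom := (gnom M)(j:=w)\<rparr>) \<alpha> x y = psat M \<alpha> x y"
  "j \<notin> noms_node \<phi> \<Longrightarrow> nsat (M\<lparr>gnom := (gnom M)(j:=w)\<rparr>) \<phi> x = nsat M \<phi> x"
  by (induct \<alpha> and \<phi> arbitrary: x y and x) auto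

lemma model_rel: "is_model M \<Longrightarrow> (x, y) \<in> rel M a \<Longrightarrow> x \<in> dom M \<and> y \<in> dom M"
  unfolding is_model_def by (meson SigmaD1 SigmaD2 subsetD)

lemma model_gnom: "is_model M \<Longrightarrow> gnom M i \<in> dom M"
  unfolding is_model_def by (elim conjE) (erule spec)

lemma model_eqv: "is_model M \<Longrightarrow> equiv (dom M) (eqv M c)"
  unfolding is_model_def by (elim conjE) (erule spec)

lemma model_upd: "is_model M \<Longrightarrow> w \<in> dom M \<Longrightarrow> is_model (M\<lparr>gnom := (gnom M)(j:=w)\<rparr>)"
proof -
  assume a: "is_model M" "w \<in> dom M"
  let ?M = "M\<lparr>gnom := (gnom M)(j:=w)\<rparr>"
  have e: "dom ?M = dom M" "rel ?M = rel M" "eqv ?M = eqv M" "val ?M = val M" "gnom ?M = (gnom M)(j:=w)"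
    by simp_all
  have "\<forall>i. gnom ?M i \<in> dom ?M" unfolding e using a model_gnom[OF a(1)] by simp
  then show "is_model ?M" using a(1) unfolding is_model_def e by blast
qed

lemma psat_dom_aux:
  "\<forall>w w'. is_model M \<longrightarrow> w \<in> dom M \<longrightarrow> psat M \<alpha> w w' \<longrightarrow> w' \<in> dom M"
  "nsat M \<phi> x \<longrightarrow> True"
proof (induct \<alpha> and \<phi>)
  case (PMod x)
  show ?case
  proof (intro allI impI)
    fix w w' assume h: "is_model M" "w \<in> dom M" "psat M (PMod x) w w'"
    then have "(w, w') \<in> rel M x" by simp
    then show "w' \<in> dom M" using model_rel[OF h(1)] by blast
  qed
next
  case (PNom x)
  show ?case
  proof (intro allI impI)
    fix w w' assume h: "is_model M" "w \<in> dom M" "psat M (PNom x) w w'"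
    then have "gnom M x = w'" by simp
    then show "w' \<in> dom M" using model_gnom[OF h(1)] by blast
  qed
next
  case (PTest x)
  show ?case by simp
next
  case (PComp \<alpha>1 \<alpha>2)
  show ?case
  proof (intro allI impI)
    fix w w' assume h: "is_model M" "w \<in> dom M" "psat M (PComp \<alpha>1 \<alpha>2) w w'"
    then obtain u where "u \<in> dom M" "psat M \<alpha>2 u w'" by auto
    then show "w' \<in> dom M" using PComp(2) h(1) by blast
  qed
qed (simp_all only: simp_thms)

lemma psat_dom: "is_model M \<Longrightarrow> w \<in> dom M \<Longrightarrow> psat M \<alpha> w w' \<Longrightarrow> w' \<in> dom M"
  by (rule psat_dom_aux(1)[rule_format])

lemma pdia_sat: "is_model M \<Longrightarrow> w \<in> dom M \<Longrightarrow>
  nsat M (pdia \<alpha> \<psi>) w \<longleftrightarrow> (\<exists>w'\<in>dom M. psat M \<alpha> w w' \<and> nsat M \<psi> w')"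
proof (induct \<alpha> \<psi> arbitrary: w rule: pdia.induct)
  case (1 x) then show ?case by auto
next
  case (2 x) then show ?case using model_gnom[of M x] by auto
next
  case (3 x) then show ?case by (auto simp: NAnd_def NNot_def)
next
  case (4 \<alpha>1 \<alpha>2 \<psi>)
  have ih1: "nsat M (pdia \<alpha>1 (pdia \<alpha>2 \<psi>)) w \<longleftrightarrow> (\<exists>u\<in>dom M. psat M \<alpha>1 w u \<and> nsat M (pdia \<alpha>2 \<psi>) u)"
    by (rule 4(2)[OF 4(3) 4(4)])
  have ih2: "u \<in> dom M \<Longrightarrow> nsat M (pdia \<alpha>2 \<psi>) u \<longleftrightarrow> (\<exists>w'\<in>dom M. psat M \<alpha>2 u w' \<and> nsat M \<psi> w')" for u
    by (rule 4(1)[OF 4(3)])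
  show ?case
  proof
    assume "nsat M (pdia (PComp \<alpha>1 \<alpha>2) \<psi>) w"
    then obtain u where u: "u \<in> dom M" "psat M \<alpha>1 w u" "nsat M (pdia \<alpha>2 \<psi>) u"
      using ih1 by auto
    then obtain w' where "w' \<in> dom M" "psat M \<alpha>2 u w'" "nsat M \<psi> w'"
      using ih2 by blast
    then show "\<exists>w'\<in>dom M. psat M (PComp \<alpha>1 \<alpha>2) w w' \<and> nsat M \<psi> w'"
      using u by auto
  next
    assume "\<exists>w'\<in>dom M. psat M (PComp \<alpha>1 \<alpha>2) w w' \<and> nsat M \<psi> w'"
    then obtain w' u where h: "w' \<in> dom M" "u \<in> dom M" "psat M \<alpha>1 w u" "psat M \<alpha>2 u w'" "nsat M \<psi> w'"
      by auto
    then have "nsat M (pdia \<alpha>2 \<psi>) u" using ih2 by blast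
    then show "nsat M (pdia (PComp \<alpha>1 \<alpha>2) \<psi>) w"
      using ih1 h by auto
  qed
qed

lemma noms_seq_ins: "noms_seq (insert \<phi> \<Gamma>, \<Delta>) = noms_node \<phi> \<union> noms_seq (\<Gamma>, \<Delta>)"
  "noms_seq (\<Gamma>, insert \<phi> \<Delta>) = noms_node \<phi> \<union> noms_seq (\<Gamma>, \<Delta>)"
  unfolding noms_seq_def by auto

lemma noms_seq_fresh: "j \<notin> noms_seq (\<Gamma>, \<Delta>) \<Longrightarrow> \<phi> \<in> \<Gamma> \<union> \<Delta> \<Longrightarrow> j \<notin> noms_node \<phi>"
  unfolding noms_seq_def by auto

lemma valid_same:
  assumes "\<And>M n. is_model (M::('w,'m,'c) model) \<Longrightarrow> n \<in> dom M \<Longrightarrow> (\<forall>\<gamma>\<in>\<Gamma>. nsat M \<gamma> n) \<Longrightarrow>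
     (\<forall>p\<in>set ps. (\<forall>\<gamma>\<in>fst p. nsat M \<gamma> n) \<longrightarrow> (\<exists>\<delta>\<in>snd p. nsat M \<delta> n)) \<Longrightarrow> \<exists>\<delta>\<in>\<Delta>. nsat M \<delta> n"
    and "\<forall>p\<in>set ps. valid TYPE('w) p"
  shows "valid TYPE('w) (\<Gamma>, \<Delta>)"
  using assms unfolding valid_def by auto

lemma validD: "valid TYPE('w) (\<Gamma>, \<Delta>) \<Longrightarrow> is_model (M::('w,'m,'c) model) \<Longrightarrow> n \<in> dom M \<Longrightarrow>
  (\<forall>\<gamma>\<in>\<Gamma>. nsat M \<gamma> n) \<Longrightarrow> \<exists>\<delta>\<in>\<Delta>. nsat M \<delta> n"
  unfolding valid_def by auto

lemma valid0:
  assumes "\<And>M n. is_model (M::('w,'m,'c) model) \<Longrightarrow> n \<in> dom M \<Longrightarrow> (\<forall>\<gamma>\<in>\<Gamma>. nsat M \<gamma> n) \<Longrightarrow> \<exists>\<delta>\<in>\<Delta>. nsat M \<delta> n"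
  shows "valid TYPE('w) (\<Gamma>, \<Delta>)"
  using assms unfolding valid_def by auto

lemma valid1:
  assumes "\<And>M n. is_model (M::('w,'m,'c) model) \<Longrightarrow> n \<in> dom M \<Longrightarrow> (\<forall>\<gamma>\<in>\<Gamma>. nsat M \<gamma> n) \<Longrightarrow>
     ((\<forall>\<gamma>\<in>\<Gamma>'. nsat M \<gamma> n) \<longrightarrow> (\<exists>\<delta>\<in>\<Delta>'. nsat M \<delta> n)) \<Longrightarrow> \<exists>\<delta>\<in>\<Delta>. nsat M \<delta> n"
    and "\<forall>p\<in>set [(\<Gamma>', \<Delta>')]. valid TYPE('w) p"
  shows "valid TYPE('w) (\<Gamma>, \<Delta>)"
  using assms unfolding valid_def by auto

lemma valid2:
  assumes "\<And>M n. is_model (M::('w,'m,'c) model) \<Longrightarrow> n \<in> dom M \<Longrightarrow> (\<forall>\<gamma>\<in>\<Gamma>. nsat M \<gamma> n) \<Longrightarrow>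
     ((\<forall>\<gamma>\<in>\<Gamma>1. nsat M \<gamma> n) \<longrightarrow> (\<exists>\<delta>\<in>\<Delta>1. nsat M \<delta> n)) \<Longrightarrow>
     ((\<forall>\<gamma>\<in>\<Gamma>2. nsat M \<gamma> n) \<longrightarrow> (\<exists>\<delta>\<in>\<Delta>2. nsat M \<delta> n)) \<Longrightarrow> \<exists>\<delta>\<in>\<Delta>. nsat M \<delta> n"
    and "\<forall>p\<in>set [(\<Gamma>1, \<Delta>1), (\<Gamma>2, \<Delta>2)]. valid TYPE('w) p"
  shows "valid TYPE('w) (\<Gamma>, \<Delta>)"
  using assms unfolding valid_def by auto

lemma rule_sound:
  assumes "grule ps s" "\<forall>p\<in>set ps. valid TYPE('w) p"
  shows "valid TYPE('w) s"
  using assms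
proof (induction rule: grule.induct)
  case (Ax \<phi> i p j c \<Gamma> \<Delta>) show ?case by (rule valid0) auto
next
  case (BotAx i \<Gamma> \<Delta>) show ?case by (rule valid0) auto
next
  case (ImpL \<Gamma> i \<phi> \<Delta> \<psi>) show ?case by (rule valid2[OF _ ImpL.prems]) auto
next
  case (ImpR i \<phi> \<Gamma> \<psi> \<Delta>) show ?case by (rule valid1[OF _ ImpR.prems]) auto
next
  case (AtT i \<Gamma> \<Delta>) show ?case by (rule valid1[OF _ AtT.prems]) auto
next
  case (At5 j k i \<Gamma> \<Delta>) show ?case by (rule valid1[OF _ At5.prems]) auto
next
  case (Nom j \<Gamma> \<Delta> i)
  have V: "valid TYPE('w) (insert (NAt i (NNom j)) \<Gamma>, \<Delta>)" using Nom.prems by simp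
  show ?case unfolding valid_def
  proof (intro allI impI ballI)
    fix M :: "('w,'a,'b) model" and n
    assume M: "is_model M" "n \<in> dom M" "\<forall>\<gamma>\<in>fst (\<Gamma>, \<Delta>). nsat M \<gamma> n"
    define M' where "M' = M\<lparr>gnom := (gnom M)(j:=gnom M i)\<rparr>"
    have gi: "gnom M i \<in> dom M" using M unfolding is_model_def by auto
    have eq: "nsat M' \<phi> n = nsat M \<phi> n"
      if "\<phi> \<in> \<Gamma> \<union> \<Delta>" for \<phi> unfolding M'_def by (intro noms_upd(2) noms_seq_fresh[OF Nom(1) that])
    have m': "is_model M'" unfolding M'_def using model_upd[OF M(1) gi] .
    have d': "n \<in> dom M'" unfolding M'_def using M by simp
    have "nsat M' (NAt i (NNom j)) n" unfolding M'_def by simp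
    moreover have "\<forall>\<gamma>\<in>\<Gamma>. nsat M' \<gamma> n" using M eq by auto
    ultimately have "\<exists>\<delta>\<in>\<Delta>. nsat M' \<delta> n" using validD[OF V m' d'] by auto
    then show "\<exists>\<delta>\<in>snd (\<Gamma>, \<Delta>). nsat M \<delta> n" using eq by auto
  qed
next
  case (S1 \<phi> j i \<Gamma> \<Delta>) show ?case by (rule valid1[OF _ S1.prems]) auto
next
  case (S2 i a k j \<Gamma> \<Delta>) show ?case by (rule valid1[OF _ S2.prems]) auto
next
  case (S3 j c k i \<Gamma> \<Delta>) show ?case by (rule valid1[OF _ S3.prems]) auto
next
  case (AtL i \<phi> \<Gamma> \<Delta> j) show ?case by (rule valid1[OF _ AtL.prems]) auto
next
  case (AtR \<Gamma> i \<phi> \<Delta> j) show ?case by (rule valid1[OF _ AtR.prems]) auto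
next
  case (DiaL j i a \<phi> \<Gamma> \<Delta>)
  have V: "valid TYPE('w) (insert (NAt i (NDia a (NNom j))) (insert (NAt j \<phi>) \<Gamma>), \<Delta>)" using DiaL.prems by simp
  show ?case unfolding valid_def
  proof (intro allI impI ballI)
    fix M :: "('w,'a,'b) model" and n
    assume M: "is_model M" "n \<in> dom M" "\<forall>\<gamma>\<in>fst (insert (NAt i (NDia a \<phi>)) \<Gamma>, \<Delta>). nsat M \<gamma> n"
    then obtain w where w: "w \<in> dom M" "(gnom M i, w) \<in> rel M a" "nsat M \<phi> w" by auto
    define M' where "M' = M\<lparr>gnom := (gnom M)(j:=w)\<rparr>"
    have eq: "nsat M' \<psi> n = nsat M \<psi> n"
      if "\<psi> \<in> insert (NAt i (NDia a \<phi>)) \<Gamma> \<union> \<Delta>" for \<psi>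
      unfolding M'_def by (intro noms_upd(2) noms_seq_fresh[OF DiaL(1) that])
    have ji: "j \<noteq> i" "j \<notin> noms_node \<phi>" using DiaL(1) unfolding noms_seq_def by auto
    have m': "is_model M'" unfolding M'_def using model_upd[OF M(1) w(1)] .
    have d': "n \<in> dom M'" unfolding M'_def using M by simp
    have "nsat M' (NAt i (NDia a (NNom j))) n" unfolding M'_def using ji w by auto
    moreover have "nsat M' (NAt j \<phi>) n"
    proof -
      have "nsat M' \<phi> w" unfolding M'_def using noms_upd(2)[OF ji(2), of M w w] w(3) by simp
      moreover have "gnom M' j = w" unfolding M'_def by simp
      ultimately show ?thesis by simp
    qed
    moreover have "\<forall>\<gamma>\<in>\<Gamma>. nsat M' \<gamma> n" using M eq by auto
    ultimately have "\<exists>\<delta>\<in>\<Delta>. nsat M' \<delta> n" using validD[OF V m' d'] by auto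
    then show "\<exists>\<delta>\<in>snd (insert (NAt i (NDia a \<phi>)) \<Gamma>, \<Delta>). nsat M \<delta> n" using eq by auto
  qed
next
  case (DiaR i a j \<Gamma> \<phi> \<Delta>)
  have V: "valid TYPE('w) (insert (NAt i (NDia a (NNom j))) \<Gamma>, insert (NAt i (NDia a \<phi>)) (insert (NAt j \<phi>) \<Delta>))"
    using DiaR.prems by simp
  show ?case unfolding valid_def
  proof (intro allI impI ballI)
    fix M :: "('w,'a,'b) model" and n
    assume M: "is_model M" "n \<in> dom M" "\<forall>\<gamma>\<in>fst (insert (NAt i (NDia a (NNom j))) \<Gamma>, insert (NAt i (NDia a \<phi>)) \<Delta>). nsat M \<gamma> n"
    have gj: "gnom M j \<in> dom M" using M unfolding is_model_def by auto
    have "\<exists>\<delta>\<in>insert (NAt i (NDia a \<phi>)) (insert (NAt j \<phi>) \<Delta>). nsat M \<delta> n"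
      using validD[OF V M(1,2)] M(3) by simp
    then show "\<exists>\<delta>\<in>snd (insert (NAt i (NDia a (NNom j))) \<Gamma>, insert (NAt i (NDia a \<phi>)) \<Delta>). nsat M \<delta> n"
      using M gj by auto
  qed
next
  case (CmpL j k i b \<alpha> c \<beta> \<Gamma> \<Delta>)
  have V: "valid TYPE('w) (insert (NAt i (pdia \<alpha> (NNom j))) (insert (NAt i (pdia \<beta> (NNom k)))
                  (insert (cmp b (PNom j) c (PNom k)) \<Gamma>)), \<Delta>)" using CmpL.prems by simp
  show ?case unfolding valid_def
  proof (intro allI impI ballI)
    fix M :: "('w,'a,'b) model" and n
    assume M: "is_model M" "n \<in> dom M" "\<forall>\<gamma>\<in>fst (insert (NAt i (cmp b \<alpha> c \<beta>)) \<Gamma>, \<Delta>). nsat M \<gamma> n"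
    then have "nsat M (cmp b \<alpha> c \<beta>) (gnom M i)" by simp
    then obtain u v where uv: "u \<in> dom M" "v \<in> dom M" "psat M \<alpha> (gnom M i) u" "psat M \<beta> (gnom M i) v"
      "(u, v) \<in> eqv M c \<longleftrightarrow> b"
      by (cases b) (auto simp: cmp_def)
    define M1 where "M1 = M\<lparr>gnom := (gnom M)(j:=u)\<rparr>"
    define M' where "M' = M1\<lparr>gnom := (gnom M1)(k:=v)\<rparr>"
    note fr = CmpL(2,3)
    have eq: "nsat M' \<psi> n = nsat M \<psi> n"
      if "\<psi> \<in> insert (NAt i (cmp b \<alpha> c \<beta>)) \<Gamma> \<union> \<Delta>" for \<psi>
    proof -
      have "nsat M' \<psi> n = nsat M1 \<psi> n"
        unfolding M'_def by (intro noms_upd(2) noms_seq_fresh[OF fr(2) that])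
      also have "\<dots> = nsat M \<psi> n"
        unfolding M1_def by (intro noms_upd(2) noms_seq_fresh[OF fr(1) that])
      finally show ?thesis .
    qed
    have ji: "j \<noteq> i" "k \<noteq> i" "j \<notin> noms_path \<alpha>" "k \<notin> noms_path \<alpha>" "j \<notin> noms_path \<beta>" "k \<notin> noms_path \<beta>"
      using fr unfolding noms_seq_def by (auto simp: cmp_def split: if_splits)
    have pa: "psat M' \<alpha> x y = psat M \<alpha> x y" "psat M' \<beta> x y = psat M \<beta> x y" for x y
    proof -
      have "psat M' \<alpha> x y = psat M1 \<alpha> x y" unfolding M'_def by (intro noms_upd(1) ji)
      also have "\<dots> = psat M \<alpha> x y" unfolding M1_def by (intro noms_upd(1) ji)
      finally show "psat M' \<alpha> x y = psat M \<alpha> x y" .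
      have "psat M' \<beta> x y = psat M1 \<beta> x y" unfolding M'_def by (intro noms_upd(1) ji)
      also have "\<dots> = psat M \<beta> x y" unfolding M1_def by (intro noms_upd(1) ji)
      finally show "psat M' \<beta> x y = psat M \<beta> x y" .
    qed
    have m1: "is_model M1" unfolding M1_def using model_upd[OF M(1) uv(1)] .
    have m': "is_model M'" unfolding M'_def using model_upd[OF m1] uv(2) by (simp add: M1_def)
    have dm: "dom M' = dom M" "eqv M' = eqv M" unfolding M'_def M1_def by auto
    have gg: "gnom M' i = gnom M i" "gnom M' j = u" "gnom M' k = v"
      unfolding M'_def M1_def using ji CmpL(1) by auto
    have gi: "gnom M' i \<in> dom M'" using m' unfolding is_model_def by auto
    have p1: "nsat M' (NAt i (pdia \<alpha> (NNom j))) n"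
      using pdia_sat[OF m' gi, of \<alpha> "NNom j"] uv gg dm pa by auto
    have p2: "nsat M' (NAt i (pdia \<beta> (NNom k))) n"
      using pdia_sat[OF m' gi, of \<beta> "NNom k"] uv gg dm pa by auto
    have p3: "nsat M' (cmp b (PNom j) c (PNom k)) n"
      using uv gg dm by (cases b) (auto simp: cmp_def)
    have d': "n \<in> dom M'" using M dm by simp
    have "\<forall>\<gamma>\<in>\<Gamma>. nsat M' \<gamma> n" using M eq by auto
    then have "\<exists>\<delta>\<in>\<Delta>. nsat M' \<delta> n" using validD[OF V m' d'] p1 p2 p3 by auto
    then show "\<exists>\<delta>\<in>snd (insert (NAt i (cmp b \<alpha> c \<beta>)) \<Gamma>, \<Delta>). nsat M \<delta> n" using eq by auto
  qed
next
  case (CmpR i \<alpha> j \<beta> k \<Gamma> b c \<Delta>)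
  have V: "valid TYPE('w) (insert (NAt i (pdia \<alpha> (NNom j))) (insert (NAt i (pdia \<beta> (NNom k))) \<Gamma>),
                 insert (NAt i (cmp b \<alpha> c \<beta>)) (insert (cmp b (PNom j) c (PNom k)) \<Delta>))"
    using CmpR.prems by simp
  show ?case unfolding valid_def
  proof (intro allI impI ballI)
    fix M :: "('w,'a,'b) model" and n
    assume M: "is_model M" "n \<in> dom M" "\<forall>\<gamma>\<in>fst (insert (NAt i (pdia \<alpha> (NNom j))) (insert (NAt i (pdia \<beta> (NNom k))) \<Gamma>),
            insert (NAt i (cmp b \<alpha> c \<beta>)) \<Delta>). nsat M \<gamma> n"
    have gi: "gnom M i \<in> dom M" "gnom M j \<in> dom M" "gnom M k \<in> dom M" using M unfolding is_model_def by auto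
    have "\<exists>\<delta>\<in>insert (NAt i (cmp b \<alpha> c \<beta>)) (insert (cmp b (PNom j) c (PNom k)) \<Delta>). nsat M \<delta> n"
      using validD[OF V M(1,2)] M(3) by simp
    moreover have "psat M \<alpha> (gnom M i) (gnom M j)" "psat M \<beta> (gnom M i) (gnom M k)"
      using M(3) pdia_sat[OF M(1) gi(1)] by auto
    ultimately show "\<exists>\<delta>\<in>snd (insert (NAt i (pdia \<alpha> (NNom j))) (insert (NAt i (pdia \<beta> (NNom k))) \<Gamma>),
            insert (NAt i (cmp b \<alpha> c \<beta>)) \<Delta>). nsat M \<delta> n"
      using gi by (cases b) (auto simp: cmp_def)
  qed
next
  case (EqT i c \<Gamma> \<Delta>)
  have V: "valid TYPE('w) (insert (Ateq i c i) \<Gamma>, \<Delta>)" using EqT.prems by simp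
  show ?case unfolding valid_def
  proof (intro allI impI ballI)
    fix M :: "('w,'a,'b) model" and n
    assume M: "is_model M" "n \<in> dom M" "\<forall>\<gamma>\<in>fst (\<Gamma>, \<Delta>). nsat M \<gamma> n"
    have gi: "gnom M i \<in> dom M" "(gnom M i, gnom M i) \<in> eqv M c"
      using M unfolding is_model_def equiv_def refl_on_def by auto
    then show "\<exists>\<delta>\<in>snd (\<Gamma>, \<Delta>). nsat M \<delta> n" using validD[OF V M(1,2)] M(3) by auto
  qed
next
  case (Eq5 j c k i \<Gamma> \<Delta>)
  have V: "valid TYPE('w) (insert (Ateq j c k) (insert (Ateq i c j) (insert (Ateq i c k) \<Gamma>)), \<Delta>)"
    using Eq5.prems by simp
  show ?case unfolding valid_def
  proof (intro allI impI ballI)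
    fix M :: "('w,'a,'b) model" and n
    assume M: "is_model M" "n \<in> dom M" "\<forall>\<gamma>\<in>fst (insert (Ateq i c j) (insert (Ateq i c k) \<Gamma>), \<Delta>). nsat M \<gamma> n"
    have e: "equiv (dom M) (eqv M c)" using M unfolding is_model_def by auto
    have "(gnom M i, gnom M j) \<in> eqv M c" "(gnom M i, gnom M k) \<in> eqv M c" using M by auto
    then have "(gnom M j, gnom M k) \<in> eqv M c" using e unfolding equiv_def sym_def trans_def by blast
    moreover have "gnom M j \<in> dom M" "gnom M k \<in> dom M" using M unfolding is_model_def by auto
    ultimately show "\<exists>\<delta>\<in>snd (insert (Ateq i c j) (insert (Ateq i c k) \<Gamma>), \<Delta>). nsat M \<delta> n"
      using validD[OF V M(1,2)] M(3) by auto
  qed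
next
  case (NEqL \<Gamma> i c j \<Delta>)
  have V: "valid TYPE('w) (\<Gamma>, insert (Ateq i c j) \<Delta>)" using NEqL.prems by simp
  show ?case unfolding valid_def
  proof (intro allI impI ballI)
    fix M :: "('w,'a,'b) model" and n
    assume M: "is_model M" "n \<in> dom M" "\<forall>\<gamma>\<in>fst (insert (NNeq (PNom i) c (PNom j)) \<Gamma>, \<Delta>). nsat M \<gamma> n"
    then have "\<not> nsat M (Ateq i c j) n" by auto
    then show "\<exists>\<delta>\<in>snd (insert (NNeq (PNom i) c (PNom j)) \<Gamma>, \<Delta>). nsat M \<delta> n"
      using validD[OF V M(1,2)] M(3) by auto
  qed
next
  case (NEqR i c j \<Gamma> \<Delta>)
  have V: "valid TYPE('w) (insert (Ateq i c j) \<Gamma>, \<Delta>)" using NEqR.prems by simp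
  show ?case unfolding valid_def
  proof (intro allI impI ballI)
    fix M :: "('w,'a,'b) model" and n
    assume M: "is_model M" "n \<in> dom M" "\<forall>\<gamma>\<in>fst (\<Gamma>, insert (NNeq (PNom i) c (PNom j)) \<Delta>). nsat M \<gamma> n"
    have "gnom M i \<in> dom M" "gnom M j \<in> dom M" using M unfolding is_model_def by auto
    then show "\<exists>\<delta>\<in>snd (\<Gamma>, insert (NNeq (PNom i) c (PNom j)) \<Delta>). nsat M \<delta> n"
      using validD[OF V M(1,2)] M(3) by auto
  qed
next
  case (Cut \<Gamma> \<phi> \<Delta> \<Gamma>' \<Delta>') show ?case by (rule valid2[OF _ Cut.prems]) auto
next
  case (WL \<Gamma> \<Delta> \<phi>) show ?case by (rule valid1[OF _ WL.prems]) auto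
next
  case (WR \<Gamma> \<Delta> \<phi>) show ?case by (rule valid1[OF _ WR.prems]) auto
qed

lemma provable_valid: "provable s \<Longrightarrow> valid TYPE('w) s"
proof (induction rule: provable.induct)
  case (1 ps s)
  have "\<forall>p\<in>set ps. valid TYPE('w) p" using 1(3) by blast
  then show ?case by (rule rule_sound[OF 1(1)])
qed

theorem theorem1:
  fixes \<Gamma> \<Delta> :: "('m::finite, 'c::finite) node set"
  assumes "is_sequent (\<Gamma>, \<Delta>)"
    and "provable (\<Gamma>, \<Delta>)"
  shows "valid TYPE('w) (\<Gamma>, \<Delta>)"
  by (rule provable_valid[OF assms(2)])

end
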